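(* Run UBEV-S (described in the context) on a finite-horizon episodic stationary MDP. Outside of the failure event, for all episodes $k$, timesteps $t\in[H]$ and states $s$, $\tilde V^{\pi_k}_t(s)\ge V^*_t(s)$.
   Context: Setting: a finite-horizon episodic MDP with finite state set $\mathcal S$ ($|\mathcal S|=S$), finite action set $\mathcal A$ ($|\mathcal A|=A$), horizon $H$, stationary transitions $p(s'\mid s,a)$ and mean rewards $r(s,a)\in[0,1]$ (observed rewards in $[0,1]$). $V^*_t$ is the optimal value function at timestep $t$ ($V^*_{H+1}\equiv0$). For a vector $V$, $\mathrm{rng}\,V=\max_sV(s)-\min_sV(s)$. Algorithm UBEV-S (input $\delta\in(0,1]$): maintain, aggregated over all timesteps of all past episodes, counts $n(s,a)$, reward sums $l(s,a)$, transition counts $m(s',s,a)$ (initially $0$), and a scalar $\phi^+$ initialized to $0$ once. At the start of each episode, set $\tilde V_{H+1}\equiv0$ and for $t=H,\dots,1$ and each $s$: for each $a$, $\phi(s,a)=\sqrt{(2\ln\ln(\max\{e,n(s,a)\})+\ln(27HSA/\delta))/n(s,a)}$, $\hat r(s,a)=l(s,a)/n(s,a)$, $\hat p(s,a)=m(\cdot,s,a)/n(s,a)$, $Q(a)=\min\{1,\hat r+\phi\}+\min\{\max_{s'}\tilde V_{t+1}(s'),\hat p(s,a)^\top\tilde V_{t+1}+\min\{H-t,\mathrm{rng}\,\tilde V_{t+1}+\phi^+\}\phi(s,a)\}$; set $\pi_k(s,t)=\arg\max_aQ(a)$, $\tilde V_t(s)=Q(\pi_k(s,t))$, $\phi^+\leftarrow\max\{4\sqrt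 SH^2\phi(s,\pi_k(s,t)),\phi^+\}$. Then execute $\pi_k$ for $H$ steps and update the counts. In episode $k$: $n_k,\hat r_k,\hat p_k,\phi_k$ denote the quantities at the start of the episode, and $\tilde V^{\pi_k}_t$ is the vector $\tilde V_t$ computed in episode $k$. Failure event: let $w_{tk}(s,a)$ be the probability, in episode $k$ under $\pi_k$, of being in $s$ at step $t$ and taking $a$. "Outside of the failure event" means that for all episodes $k$, timesteps $t$ and pairs $(s,a)$: $n_k(s,a)\ge\frac12\sum_{i<k}\sum_{t\in[H]}w_{ti}(s,a)-H\ln\frac{9SA}{\delta}$; $|\hat r_k(s,a)-r(s,a)|\le\phi_k(s,a)$; $|(\hat p_k(s,a)-p(\cdot\mid s,a))^\top V^*_{t+1}|\le(\mathrm{rng}\,V^*_{t+1})\phi_k(s,a)$; and $\|\hat p_k(s,a)-p(\cdot\mid s,a)\|_1\le4\sqrt S\,\phi_k(s,a)$. *)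

theory Defs
  imports "HOL-Analysis.Analysis" "HOL-Library.Extended_Real"
begin

(* Conventions: states are the naturals {..<S}, actions the naturals {..<A};
   episodes are indexed k = 1,2,...; timesteps t = 1..H; in episode i the trajectory
   visits states x i 1, ..., x i (H+1) and receives observed rewards rw i 1, ..., rw i H;
   pol i s t is the action chosen by pi_i in state s at timestep t.
   p s a s' = p(s'|s,a), r s a = mean reward. *)

definition visits :: "nat \<Rightarrow> (nat \<Rightarrow> nat \<Rightarrow> nat) \<Rightarrow> (nat \<Rightarrow> nat \<Rightarrow> nat \<Rightarrow> nat)
    \<Rightarrow> nat \<Rightarrow> nat \<Rightarrow> nat \<Rightarrow> (nat \<times> nat) set" where
  "visits H x pol k s a =
     {(i, t). 1 \<le> i \<and> i < k \<and> 1 \<le> t \<and> t \<le> H \<and> x i t = s \<and> pol i s t = a}"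

definition cnt :: "nat \<Rightarrow> (nat \<Rightarrow> nat \<Rightarrow> nat) \<Rightarrow> (nat \<Rightarrow> nat \<Rightarrow> nat \<Rightarrow> nat)
    \<Rightarrow> nat \<Rightarrow> nat \<Rightarrow> nat \<Rightarrow> nat" where
  "cnt H x pol k s a = card (visits H x pol k s a)"

definition rsum :: "nat \<Rightarrow> (nat \<Rightarrow> nat \<Rightarrow> nat) \<Rightarrow> (nat \<Rightarrow> nat \<Rightarrow> real) \<Rightarrow> (nat \<Rightarrow> nat \<Rightarrow> nat \<Rightarrow> nat)
    \<Rightarrow> nat \<Rightarrow> nat \<Rightarrow> nat \<Rightarrow> real" where
  "rsum H x rw pol k s a = (\<Sum>(i, t)\<in>visits H x pol k s a. rw i t)"

definition tcnt :: "nat \<Rightarrow> (nat \<Rightarrow> nat \<Rightarrow> nat) \<Rightarrow> (nat \<Rightarrow> nat \<Rightarrow> nat \<Rightarrow> nat)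
    \<Rightarrow> nat \<Rightarrow> nat \<Rightarrow> nat \<Rightarrow> nat \<Rightarrow> nat" where
  "tcnt H x pol k s' s a = card {(i, t)\<in>visits H x pol k s a. x i (Suc t) = s'}"

definition rhat :: "nat \<Rightarrow> (nat \<Rightarrow> nat \<Rightarrow> nat) \<Rightarrow> (nat \<Rightarrow> nat \<Rightarrow> real) \<Rightarrow> (nat \<Rightarrow> nat \<Rightarrow> nat \<Rightarrow> nat)
    \<Rightarrow> nat \<Rightarrow> nat \<Rightarrow> nat \<Rightarrow> real" where
  "rhat H x rw pol k s a = rsum H x rw pol k s a / real (cnt H x pol k s a)"

definition phat :: "nat \<Rightarrow> (nat \<Rightarrow> nat \<Rightarrow> nat) \<Rightarrow> (nat \<Rightarrow> nat \<Rightarrow> nat \<Rightarrow> nat)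
    \<Rightarrow> nat \<Rightarrow> nat \<Rightarrow> nat \<Rightarrow> nat \<Rightarrow> real" where
  "phat H x pol k s a s' = real (tcnt H x pol k s' s a) / real (cnt H x pol k s a)"

definition phi :: "nat \<Rightarrow> nat \<Rightarrow> nat \<Rightarrow> real \<Rightarrow> nat \<Rightarrow> real" where
  "phi H S A \<delta> n =
     sqrt ((2 * ln (ln (max (exp 1) (real n))) + ln (27 * real H * real S * real A / \<delta>)) / real n)"

definition phiE :: "nat \<Rightarrow> nat \<Rightarrow> nat \<Rightarrow> real \<Rightarrow> nat \<Rightarrow> ereal" where
  "phiE H S A \<delta> n = (if n = 0 then \<infinity> else ereal (phi H S A \<delta> n))"

definition maxV :: "nat \<Rightarrow> (nat \<Rightarrow> real) \<Rightarrow> real" where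
  "maxV S V = Max (V ` {..<S})"

definition rngV :: "nat \<Rightarrow> (nat \<Rightarrow> real) \<Rightarrow> real" where
  "rngV S V = Max (V ` {..<S}) - Min (V ` {..<S})"

text \<open>Q(a) of UBEV-S in episode k at timestep t, state s, with next-step vector Vn and
  current value pp of phi^+. For n(s,a) = 0 (phi = infinity) the formula evaluates to
  1 + max Vn.\<close>
definition Qval :: "nat \<Rightarrow> nat \<Rightarrow> nat \<Rightarrow> real \<Rightarrow> (nat \<Rightarrow> nat \<Rightarrow> nat) \<Rightarrow> (nat \<Rightarrow> nat \<Rightarrow> real)
    \<Rightarrow> (nat \<Rightarrow> nat \<Rightarrow> nat \<Rightarrow> nat) \<Rightarrow> nat \<Rightarrow> nat \<Rightarrow> nat \<Rightarrow> nat \<Rightarrow> (nat \<Rightarrow> real) \<Rightarrow> ereal \<Rightarrow> real" where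
  "Qval H S A \<delta> x rw pol k t s a Vn pp =
     (let n = cnt H x pol k s a; f = phi H S A \<delta> n in
      if n = 0 then 1 + maxV S Vn
      else min 1 (rhat H x rw pol k s a + f)
         + min (maxV S Vn)
               ((\<Sum>s'<S. phat H x pol k s a s' * Vn s')
                + real_of_ereal (min (ereal (real H - real t)) (ereal (rngV S Vn) + pp)) * f))"

text \<open>Relational description of a run of UBEV-S: Vt k t s is tilde V_t(s) computed in episode k,
  pol k s t = pi_k(s,t) (any argmax), phip k t j is the value of phi^+ just before state j is
  processed at timestep t of episode k (states processed in the order 0,1,...,S-1).\<close>
definition ubev_run :: "nat \<Rightarrow> nat \<Rightarrow> nat \<Rightarrow> real \<Rightarrow> (nat \<Rightarrow> nat \<Rightarrow> nat) \<Rightarrow> (nat \<Rightarrow> nat \<Rightarrow> real)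
    \<Rightarrow> (nat \<Rightarrow> nat \<Rightarrow> nat \<Rightarrow> nat) \<Rightarrow> (nat \<Rightarrow> nat \<Rightarrow> nat \<Rightarrow> real) \<Rightarrow> (nat \<Rightarrow> nat \<Rightarrow> nat \<Rightarrow> ereal) \<Rightarrow> bool" where
  "ubev_run H S A \<delta> x rw pol Vt phip \<longleftrightarrow>
     phip 1 H 0 = 0 \<and>
     (\<forall>k\<ge>1. \<forall>s<S. Vt k (H + 1) s = 0) \<and>
     (\<forall>k\<ge>1. \<forall>t\<in>{1..H}. \<forall>s<S.
        pol k s t < A \<and>
        (\<forall>a<A. Qval H S A \<delta> x rw pol k t s a (Vt k (t + 1)) (phip k t s)
                \<le> Qval H S A \<delta> x rw pol k t s (pol k s t) (Vt k (t + 1)) (phip k t s)) \<and>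
        Vt k t s = Qval H S A \<delta> x rw pol k t s (pol k s t) (Vt k (t + 1)) (phip k t s) \<and>
        phip k t (Suc s) =
          max (ereal (4 * sqrt (real S) * real H ^ 2) * phiE H S A \<delta> (cnt H x pol k s (pol k s t)))
              (phip k t s)) \<and>
     (\<forall>k\<ge>1. \<forall>t. 1 \<le> t \<and> t < H \<longrightarrow> phip k t 0 = phip k (Suc t) S) \<and>
     (\<forall>k\<ge>1. phip (Suc k) H 0 = phip k 1 S)"

fun Vopt :: "nat \<Rightarrow> nat \<Rightarrow> (nat \<Rightarrow> nat \<Rightarrow> real) \<Rightarrow> (nat \<Rightarrow> nat \<Rightarrow> nat \<Rightarrow> real) \<Rightarrow> nat \<Rightarrow> nat \<Rightarrow> real" where
  "Vopt S A r p 0 s = 0"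
| "Vopt S A r p (Suc m) s = Max ((\<lambda>a. r s a + (\<Sum>s'<S. p s a s' * Vopt S A r p m s')) ` {..<A})"

definition Vstar :: "nat \<Rightarrow> nat \<Rightarrow> nat \<Rightarrow> (nat \<Rightarrow> nat \<Rightarrow> real) \<Rightarrow> (nat \<Rightarrow> nat \<Rightarrow> nat \<Rightarrow> real) \<Rightarrow> nat \<Rightarrow> nat \<Rightarrow> real" where
  "Vstar H S A r p t s = Vopt S A r p (H + 1 - t) s"

text \<open>occ S p0 p pol i t s: probability of being in s at timestep t+1 of episode i under pi_i,
  starting from initial distribution p0.\<close>
fun occ :: "nat \<Rightarrow> (nat \<Rightarrow> real) \<Rightarrow> (nat \<Rightarrow> nat \<Rightarrow> nat \<Rightarrow> real) \<Rightarrow> (nat \<Rightarrow> nat \<Rightarrow> nat \<Rightarrow> nat)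
    \<Rightarrow> nat \<Rightarrow> nat \<Rightarrow> nat \<Rightarrow> real" where
  "occ S p0 p pol i 0 s = p0 s"
| "occ S p0 p pol i (Suc t) s' = (\<Sum>s<S. occ S p0 p pol i t s * p s (pol i s (Suc t)) s')"

definition w :: "nat \<Rightarrow> (nat \<Rightarrow> real) \<Rightarrow> (nat \<Rightarrow> nat \<Rightarrow> nat \<Rightarrow> real) \<Rightarrow> (nat \<Rightarrow> nat \<Rightarrow> nat \<Rightarrow> nat)
    \<Rightarrow> nat \<Rightarrow> nat \<Rightarrow> nat \<Rightarrow> nat \<Rightarrow> real" where
  "w S p0 p pol t i s a = (if pol i s t = a then occ S p0 p pol i (t - 1) s else 0)"

text \<open>Outside of the failure event. The three concentration conditions are vacuous for
  n_k(s,a) = 0, where phi_k(s,a) = infinity.\<close>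
definition outside_failure :: "nat \<Rightarrow> nat \<Rightarrow> nat \<Rightarrow> real \<Rightarrow> (nat \<Rightarrow> nat \<Rightarrow> real) \<Rightarrow> (nat \<Rightarrow> nat \<Rightarrow> nat \<Rightarrow> real)
    \<Rightarrow> (nat \<Rightarrow> real) \<Rightarrow> (nat \<Rightarrow> nat \<Rightarrow> nat) \<Rightarrow> (nat \<Rightarrow> nat \<Rightarrow> real) \<Rightarrow> (nat \<Rightarrow> nat \<Rightarrow> nat \<Rightarrow> nat) \<Rightarrow> bool" where
  "outside_failure H S A \<delta> r p p0 x rw pol \<longleftrightarrow>
     (\<forall>k\<ge>1. \<forall>s<S. \<forall>a<A.
        real (cnt H x pol k s a) \<ge>
          1/2 * (\<Sum>i\<in>{1..<k}. \<Sum>t\<in>{1..H}. w S p0 p pol t i s a) - real H * ln (9 * real S * real A / \<delta>)) \<and>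
     (\<forall>k\<ge>1. \<forall>s<S. \<forall>a<A. cnt H x pol k s a > 0 \<longrightarrow>
        (let n = cnt H x pol k s a; f = phi H S A \<delta> n in
          \<bar>rhat H x rw pol k s a - r s a\<bar> \<le> f \<and>
          (\<forall>t\<in>{1..H}.
             \<bar>\<Sum>s'<S. (phat H x pol k s a s' - p s a s') * Vstar H S A r p (t + 1) s'\<bar>
               \<le> rngV S (Vstar H S A r p (t + 1)) * f) \<and>
          (\<Sum>s'<S. \<bar>phat H x pol k s a s' - p s a s'\<bar>) \<le> 4 * sqrt (real S) * f))"

end

theory Submission
  imports Defs
begin

lemma Vopt_bounds:
  assumes "S \<ge> 1" "A \<ge> 1"
    and p0: "\<And>s a s'. s < S \<Longrightarrow> a < A \<Longrightarrow> s' < S \<Longrightarrow> p s a s' \<ge> 0"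
    and p1: "\<And>s a. s < S \<Longrightarrow> a < A \<Longrightarrow> (\<Sum>s'<S. p s a s') = 1"
    and rr: "\<And>s a. s < S \<Longrightarrow> a < A \<Longrightarrow> 0 \<le> r s a \<and> r s a \<le> 1"
  shows "s < S \<Longrightarrow> 0 \<le> Vopt S A r p m s \<and> Vopt S A r p m s \<le> real m"
proof (induction m arbitrary: s)
  case 0 then show ?case by simp
next
  case (Suc m)
  have fin: "finite ((\<lambda>a. r s a + (\<Sum>s'<S. p s a s' * Vopt S A r p m s')) ` {..<A})" by simp
  have ne: "(\<lambda>a. r s a + (\<Sum>s'<S. p s a s' * Vopt S A r p m s')) ` {..<A} \<noteq> {}" using assms(2) by (auto simp: lessThan_empty_iff)
  have el: "0 \<le> r s a + (\<Sum>s'<S. p s a s' * Vopt S A r p m s') \<and> r s a + (\<Sum>s'<S. p s a s' * Vopt S A r p m s') \<le> 1 + real m" if "a < A" for a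
  proof -
    have "(\<Sum>s'<S. p s a s' * Vopt S A r p m s') \<ge> 0"
      by (rule sum_nonneg) (use Suc that p0 in auto)
    moreover have "(\<Sum>s'<S. p s a s' * Vopt S A r p m s') \<le> (\<Sum>s'<S. p s a s' * real m)"
      by (rule sum_mono) (use Suc that p0 in \<open>auto intro: mult_left_mono\<close>)
    moreover have "(\<Sum>s'<S. p s a s' * real m) = real m"
      using p1[OF Suc.prems that] by (simp add: sum_distrib_right[symmetric])
    ultimately show ?thesis using rr[OF Suc.prems that] by linarith
  qed
  show ?case
  proof
    have "0 \<le> r s 0 + (\<Sum>s'<S. p s 0 s' * Vopt S A r p m s')" using el[of 0] assms(2) by auto
    also have "\<dots> \<le> Vopt S A r p (Suc m) s" using assms(2) by (simp add: Max_ge_iff)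
    finally show "0 \<le> Vopt S A r p (Suc m) s" .
    show "Vopt S A r p (Suc m) s \<le> real (Suc m)"
      using el fin ne by (auto simp add: Max_le_iff)
  qed
qed

lemma Vopt_ge:
  "a < A \<Longrightarrow> r s a + (\<Sum>s'<S. p s a s' * Vopt S A r p m s') \<le> Vopt S A r p (Suc m) s"
  by (auto simp add: Max_ge_iff)

lemma Vopt_att:
  "A \<ge> 1 \<Longrightarrow> \<exists>a<A. Vopt S A r p (Suc m) s = r s a + (\<Sum>s'<S. p s a s' * Vopt S A r p m s')"
proof -
  assume "A \<ge> 1"
  then have "Max ((\<lambda>a. r s a + (\<Sum>s'<S. p s a s' * Vopt S A r p m s')) ` {..<A}) \<in> (\<lambda>a. r s a + (\<Sum>s'<S. p s a s' * Vopt S A r p m s')) ` {..<A}"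
    by (intro Max_in) (auto simp: lessThan_empty_iff)
  then show ?thesis by auto
qed

lemma tcnt_sum:
  assumes "\<And>i t. 1 \<le> i \<Longrightarrow> 1 \<le> t \<Longrightarrow> t \<le> H + 1 \<Longrightarrow> x i t < S"
  shows "(\<Sum>s'<S. real (tcnt H x pol k s' s a)) = real (cnt H x pol k s a)"
proof -
  let ?V = "visits H x pol k s a"
  have fin: "finite ?V"
  proof (rule finite_subset)
    show "?V \<subseteq> {..<k} \<times> {..H}" by (auto simp: visits_def)
  qed simp
  have "real (cnt H x pol k s a) = (\<Sum>v\<in>?V. (1::real))" by (simp add: cnt_def)
  also have "\<dots> = (\<Sum>v\<in>?V. \<Sum>s'<S. if x (fst v) (Suc (snd v)) = s' then 1 else 0)"
  proof (rule sum.cong)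
    fix v assume "v \<in> ?V"
    then have "x (fst v) (Suc (snd v)) < S" using assms by (auto simp: visits_def)
    then show "1 = (\<Sum>s'<S. if x (fst v) (Suc (snd v)) = s' then 1 else (0::real))"
      by (simp add: sum.delta)
  qed simp
  also have "\<dots> = (\<Sum>s'<S. \<Sum>v\<in>?V. if x (fst v) (Suc (snd v)) = s' then 1 else 0)"
    by (rule sum.swap)
  also have "\<dots> = (\<Sum>s'<S. real (tcnt H x pol k s' s a))"
  proof (rule sum.cong)
    fix s' 
    have "(\<Sum>v\<in>?V. if x (fst v) (Suc (snd v)) = s' then 1 else (0::real)) = real (card {v\<in>?V. x (fst v) (Suc (snd v)) = s'})"
      using fin by (simp add: sum.If_cases Int_def)
    also have "{v\<in>?V. x (fst v) (Suc (snd v)) = s'} = {(i, t)\<in>?V. x i (Suc t) = s'}" by auto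
    finally show "(\<Sum>v\<in>?V. if x (fst v) (Suc (snd v)) = s' then 1 else (0::real)) = real (tcnt H x pol k s' s a)"
      by (simp add: tcnt_def)
  qed simp
  finally show ?thesis by simp
qed

lemma phat_sum:
  assumes "\<And>i t. 1 \<le> i \<Longrightarrow> 1 \<le> t \<Longrightarrow> t \<le> H + 1 \<Longrightarrow> x i t < S"
    and "cnt H x pol k s a > 0"
  shows "(\<Sum>s'<S. phat H x pol k s a s') = 1"
  using tcnt_sum[OF assms(1), where pol=pol and k=k and s=s and a=a] assms(2)
  by (simp add: phat_def sum_divide_distrib[symmetric])

lemma half_l1:
  fixes d V :: "nat \<Rightarrow> real"
  assumes "(\<Sum>s<S. d s) = 0" "\<And>s. s < S \<Longrightarrow> 0 \<le> V s \<and> V s \<le> R" "(\<Sum>s<S. \<bar>d s\<bar>) \<le> L" "R \<ge> 0"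
  shows "(\<Sum>s<S. d s * V s) \<le> L * R / 2"
proof -
  have "(\<Sum>s<S. d s * V s) \<le> (\<Sum>s<S. ((\<bar>d s\<bar> + d s)/2) * R)"
  proof (rule sum_mono)
    fix s assume "s \<in> {..<S}"
    then have v: "0 \<le> V s" "V s \<le> R" using assms(2) by auto
    show "d s * V s \<le> ((\<bar>d s\<bar> + d s)/2) * R"
    proof (cases "d s \<ge> 0")
      case True then show ?thesis using v by (simp add: mult_left_mono)
    next
      case False then have "d s * V s \<le> 0" using v by (simp add: mult_nonpos_nonneg)
      then show ?thesis using False by simp
    qed
  qed
  also have "\<dots> = ((\<Sum>s<S. \<bar>d s\<bar>) + (\<Sum>s<S. d s)) / 2 * R"
    by (simp add: sum_distrib_right[symmetric] sum_divide_distrib[symmetric] sum.distrib)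
  also have "\<dots> \<le> L * R / 2" using assms(1,3,4) by (simp add: mult_right_mono)
  finally show ?thesis .
qed

lemma roe_min_le:
  assumes "a \<ge> 0" shows "real_of_ereal (min (ereal a) b) \<le> a"
  using assms by (cases b) (auto simp: min_def)


lemma maxV_ge: "s < S \<Longrightarrow> V s \<le> maxV S V"
  by (auto simp: maxV_def Max_ge_iff)

lemma maxV_le: "S \<ge> 1 \<Longrightarrow> (\<And>s. s < S \<Longrightarrow> V s \<le> c) \<Longrightarrow> maxV S V \<le> c"
  by (auto simp: maxV_def Max_le_iff lessThan_empty_iff)

lemma rngV_le: "S \<ge> 1 \<Longrightarrow> (\<And>s. s < S \<Longrightarrow> 0 \<le> V s \<and> V s \<le> c) \<Longrightarrow> rngV S V \<le> c"
proof -
  assume S: "S \<ge> 1" and b: "\<And>s. s < S \<Longrightarrow> 0 \<le> V s \<and> V s \<le> c"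
  have "Max (V ` {..<S}) \<le> c" using S b by (auto simp: Max_le_iff lessThan_empty_iff)
  moreover have "0 \<le> Min (V ` {..<S})" using S b by (auto simp: Min_ge_iff lessThan_empty_iff)
  ultimately show ?thesis by (simp add: rngV_def)
qed

lemma rngV_cmp:
  assumes "S \<ge> 1" "\<And>s. s < S \<Longrightarrow> W s \<le> V s" "\<And>s. s < S \<Longrightarrow> V s \<le> W s + G"
  shows "rngV S W \<le> rngV S V + G"
proof -
  have ne: "V ` {..<S} \<noteq> {}" "W ` {..<S} \<noteq> {}" using assms(1) by (auto simp: lessThan_empty_iff)
  have "\<forall>s<S. W s \<le> Max (V ` {..<S})" using assms(2)
    by (meson Max_ge finite_imageI finite_lessThan image_eqI lessThan_iff order_trans)
  then have m1: "Max (W ` {..<S}) \<le> Max (V ` {..<S})"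
    using ne by (auto simp: Max_le_iff)
  have "Min (W ` {..<S}) \<in> W ` {..<S}" by (rule Min_in) (use ne in auto)
  then obtain s0 where s0: "s0 < S" "W s0 = Min (W ` {..<S})" by auto
  have m2: "Min (V ` {..<S}) \<le> V s0" using s0 by (auto simp: Min_le_iff)
  show ?thesis unfolding rngV_def using m1 m2 s0(2) assms(3)[OF s0(1)] by linarith
qed

lemma sum_p_le_max:
  assumes "S \<ge> 1" "\<And>s'. s' < S \<Longrightarrow> q s' \<ge> 0" "(\<Sum>s'<S. q s') = 1" "\<And>s'. s' < S \<Longrightarrow> W s' \<le> V s'"
  shows "(\<Sum>s'<S. q s' * W s') \<le> maxV S V"
proof -
  have "(\<Sum>s'<S. q s' * W s') \<le> (\<Sum>s'<S. q s' * maxV S V)"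
    by (rule sum_mono) (metis assms(2,4) lessThan_iff maxV_ge mult_left_mono order_trans)
  also have "\<dots> = maxV S V" using assms(3) by (simp add: sum_distrib_right[symmetric])
  finally show ?thesis .
qed


lemma arith_K:
  fixes h \<sigma> :: real assumes "h \<ge> 1" "\<sigma> \<ge> 1"
  shows "(h - 1) * (2 + (1 + 2 * \<sigma>) * (h - 1)) \<le> 4 * \<sigma> * h\<^sup>2"
proof -
  define u where "u = h - 1"
  have u: "u \<ge> 0" using assms u_def by simp
  have h: "h = u + 1" using u_def by simp
  have a: "(2*\<sigma>-1)*(u*u) \<ge> 0" using u assms by simp
  have b: "(8*\<sigma> - 2) * u \<ge> 0" using u assms by simp
  have "4 * \<sigma> * h\<^sup>2 - (h - 1) * (2 + (1 + 2 * \<sigma>) * (h - 1)) = (2*\<sigma>-1)*(u*u) + (8*\<sigma> - 2) * u + 4 * \<sigma>"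
    unfolding h by (simp add: algebra_simps power2_eq_square)
  then show ?thesis using a b assms by linarith
qed

locale ub =
  fixes H S A :: nat and \<delta> :: real
    and r :: "nat \<Rightarrow> nat \<Rightarrow> real" and p :: "nat \<Rightarrow> nat \<Rightarrow> nat \<Rightarrow> real" and p0 :: "nat \<Rightarrow> real"
    and x :: "nat \<Rightarrow> nat \<Rightarrow> nat" and rw :: "nat \<Rightarrow> nat \<Rightarrow> real"
    and pol :: "nat \<Rightarrow> nat \<Rightarrow> nat \<Rightarrow> nat" and Vt :: "nat \<Rightarrow> nat \<Rightarrow> nat \<Rightarrow> real"
    and phip :: "nat \<Rightarrow> nat \<Rightarrow> nat \<Rightarrow> ereal"
  assumes H1: "H \<ge> 1" and S1: "S \<ge> 1" and A1: "A \<ge> 1" and d0: "0 < \<delta>" and d1: "\<delta> \<le> 1"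
    and pnn: "\<And>s a s'. s < S \<Longrightarrow> a < A \<Longrightarrow> s' < S \<Longrightarrow> p s a s' \<ge> 0"
    and psum: "\<And>s a. s < S \<Longrightarrow> a < A \<Longrightarrow> (\<Sum>s'<S. p s a s') = 1"
    and rb: "\<And>s a. s < S \<Longrightarrow> a < A \<Longrightarrow> 0 \<le> r s a \<and> r s a \<le> 1"
    and xS: "\<And>i t. 1 \<le> i \<Longrightarrow> 1 \<le> t \<Longrightarrow> t \<le> H + 1 \<Longrightarrow> x i t < S"
    and run: "ubev_run H S A \<delta> x rw pol Vt phip"
    and good: "outside_failure H S A \<delta> r p p0 x rw pol"
begin

abbreviation "Vs \<equiv> Vstar H S A r p"
abbreviation "Q k t s a \<equiv> Qval H S A \<delta> x rw pol k t s a (Vt k (t + 1)) (phip k t s)"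
abbreviation "C \<equiv> 4 * sqrt (real S) * real H ^ 2"

lemma R0: "phip 1 H 0 = 0" using run by (simp add: ubev_run_def)
lemma Rb: "k \<ge> 1 \<Longrightarrow> s < S \<Longrightarrow> Vt k (H + 1) s = 0" using run by (simp add: ubev_run_def)
lemma Rt: "k \<ge> 1 \<Longrightarrow> 1 \<le> t \<Longrightarrow> t \<le> H \<Longrightarrow> s < S \<Longrightarrow>
   pol k s t < A \<and> (\<forall>a<A. Q k t s a \<le> Q k t s (pol k s t)) \<and> Vt k t s = Q k t s (pol k s t) \<and>
   phip k t (Suc s) = max (ereal C * phiE H S A \<delta> (cnt H x pol k s (pol k s t))) (phip k t s)"
  using run unfolding ubev_run_def by auto
lemma Rc: "k \<ge> 1 \<Longrightarrow> 1 \<le> t \<Longrightarrow> t < H \<Longrightarrow> phip k t 0 = phip k (Suc t) S"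
  using run unfolding ubev_run_def by auto
lemma Rk: "k \<ge> 1 \<Longrightarrow> phip (Suc k) H 0 = phip k 1 S"
  using run unfolding ubev_run_def by auto

lemma phip_mono_s0: assumes "k \<ge> 1" "1 \<le> t" "t \<le> H" "s \<le> s'" shows "s' \<le> S \<longrightarrow> phip k t s \<le> phip k t s'"
  using assms(4)
proof (induction s' rule: dec_induct)
  case base then show ?case by simp
next
  case (step n)
  show ?case
  proof
    assume n: "Suc n \<le> S"
    then have "phip k t s \<le> phip k t n" using step by simp
    also have "\<dots> \<le> phip k t (Suc n)" using Rt[of k t n] assms n by simp
    finally show "phip k t s \<le> phip k t (Suc n)" .
  qed
qed

lemma phip_mono_s: "k \<ge> 1 \<Longrightarrow> 1 \<le> t \<Longrightarrow> t \<le> H \<Longrightarrow> s \<le> s' \<Longrightarrow> s' \<le> S \<Longrightarrow> phip k t s \<le> phip k t s'"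
  using phip_mono_s0 by blast

lemma phip_mono_t0: assumes "k \<ge> 1" "1 \<le> t" "t \<le> t'" shows "t' \<le> H \<longrightarrow> phip k t' 0 \<le> phip k t 0"
  using assms(3)
proof (induction t' rule: dec_induct)
  case base then show ?case by simp
next
  case (step n)
  show ?case
  proof
    assume n: "Suc n \<le> H"
    have "phip k (Suc n) 0 \<le> phip k (Suc n) S" using step S1 assms n by (intro phip_mono_s) auto
    also have "\<dots> = phip k n 0" using step assms n by (simp add: Rc)
    also have "\<dots> \<le> phip k t 0" using step n by simp
    finally show "phip k (Suc n) 0 \<le> phip k t 0" .
  qed
qed

lemma phip_mono_t: "k \<ge> 1 \<Longrightarrow> 1 \<le> t \<Longrightarrow> t \<le> t' \<Longrightarrow> t' \<le> H \<Longrightarrow> phip k t' 0 \<le> phip k t 0"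
  using phip_mono_t0 by blast

lemma phip_H_nonneg: "k \<ge> 1 \<Longrightarrow> 0 \<le> phip k H 0"
proof (induction k rule: dec_induct)
  case base then show ?case using R0 by simp
next
  case (step n)
  have "phip n H 0 \<le> phip n 1 0" using step H1 by (intro phip_mono_t) auto
  also have "\<dots> \<le> phip n 1 S" using step H1 by (intro phip_mono_s) auto
  finally show ?case using step by (simp add: Rk)
qed

lemma phip_nonneg: "k \<ge> 1 \<Longrightarrow> 1 \<le> t \<Longrightarrow> t \<le> H \<Longrightarrow> s \<le> S \<Longrightarrow> 0 \<le> phip k t s"
proof -
  assume a: "k \<ge> 1" "1 \<le> t" "t \<le> H" "s \<le> S"
  have "0 \<le> phip k H 0" using a by (simp add: phip_H_nonneg)
  also have "\<dots> \<le> phip k t 0" using a by (intro phip_mono_t) auto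
  also have "\<dots> \<le> phip k t s" using a by (intro phip_mono_s) auto
  finally show ?thesis .
qed

lemma phip_later: "k \<ge> 1 \<Longrightarrow> 1 \<le> t \<Longrightarrow> t < j \<Longrightarrow> j \<le> H \<Longrightarrow> s' < S \<Longrightarrow> s \<le> S \<Longrightarrow>
   ereal C * phiE H S A \<delta> (cnt H x pol k s' (pol k s' j)) \<le> phip k t s"
proof -
  assume a: "k \<ge> 1" "1 \<le> t" "t < j" "j \<le> H" "s' < S" "s \<le> S"
  have "ereal C * phiE H S A \<delta> (cnt H x pol k s' (pol k s' j)) \<le> phip k j (Suc s')"
    using Rt[of k j s'] a by simp
  also have "\<dots> \<le> phip k j S" using a by (intro phip_mono_s) auto
  also have "\<dots> = phip k (j - 1) 0" using a Rc[of k "j - 1"] by simp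
  also have "\<dots> \<le> phip k t 0" using a by (intro phip_mono_t) auto
  also have "\<dots> \<le> phip k t s" using a by (intro phip_mono_s) auto
  finally show ?thesis .
qed

lemma Q_le: "Qval H S A \<delta> x rw pol k t s a Vn pp \<le> 1 + maxV S Vn"
  unfolding Qval_def Let_def by (auto simp: min_def)

lemma Vt_upper: "k \<ge> 1 \<Longrightarrow> 1 \<le> t \<Longrightarrow> t \<le> H + 1 \<Longrightarrow> s < S \<Longrightarrow> Vt k t s \<le> real H + 1 - real t"
proof (induction "H + 1 - t" arbitrary: t s)
  case 0 then have "t = H + 1" by simp
  then show ?case using Rb[of k s] 0 by simp
next
  case (Suc m)
  then have tH: "t \<le> H" by simp
  have "maxV S (Vt k (t + 1)) \<le> real H + 1 - real (t + 1)"
    using Suc.hyps(1)[of "t + 1"] Suc.hyps(2) Suc.prems tH S1 by (intro maxV_le) auto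
  moreover have "Vt k t s \<le> 1 + maxV S (Vt k (t + 1))"
    using Rt[of k t s] Suc.prems tH Q_le[of k t s "pol k s t" "Vt k (t+1)"] by simp
  ultimately show ?case by simp
qed


lemma Vs_bounds: "1 \<le> t \<Longrightarrow> t \<le> H + 1 \<Longrightarrow> s < S \<Longrightarrow> 0 \<le> Vs t s \<and> Vs t s \<le> real H + 1 - real t"
proof -
  assume a: "1 \<le> t" "t \<le> H + 1" "s < S"
  have "0 \<le> Vopt S A r p (H + 1 - t) s \<and> Vopt S A r p (H + 1 - t) s \<le> real (H + 1 - t)"
    by (rule Vopt_bounds[where S=S and A=A and p=p and r=r]) (use S1 A1 pnn psum rb a in auto)
  then show ?thesis using a by (simp add: Vstar_def of_nat_diff)
qed

lemma Vs_end: "Vs (H + 1) s = 0" by (simp add: Vstar_def)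

lemma Vs_idx: "t \<le> H \<Longrightarrow> Vs t s = Vopt S A r p (Suc (H - t)) s \<and> Vs (t + 1) s = Vopt S A r p (H - t) s"
  by (simp add: Vstar_def Suc_diff_le)

lemma Vs_step: "t \<le> H \<Longrightarrow> a < A \<Longrightarrow> r s a + (\<Sum>s'<S. p s a s' * Vs (t + 1) s') \<le> Vs t s"
  using Vopt_ge[where a=a and A=A and r=r and s=s and S=S and p=p and m="H - t"] by (simp add: Vstar_def Suc_diff_le)

lemma Vs_att: "t \<le> H \<Longrightarrow> \<exists>a<A. Vs t s = r s a + (\<Sum>s'<S. p s a s' * Vs (t + 1) s')"
  using Vopt_att[OF A1, of S r p "H - t" s] by (simp add: Vstar_def Suc_diff_le)

lemma G1: "k \<ge> 1 \<Longrightarrow> s < S \<Longrightarrow> a < A \<Longrightarrow> cnt H x pol k s a > 0 \<Longrightarrow>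
   \<bar>rhat H x rw pol k s a - r s a\<bar> \<le> phi H S A \<delta> (cnt H x pol k s a) \<and>
   (\<forall>t\<in>{1..H}. \<bar>\<Sum>s'<S. (phat H x pol k s a s' - p s a s') * Vs (t + 1) s'\<bar>
               \<le> rngV S (Vs (t + 1)) * phi H S A \<delta> (cnt H x pol k s a)) \<and>
   (\<Sum>s'<S. \<bar>phat H x pol k s a s' - p s a s'\<bar>) \<le> 4 * sqrt (real S) * phi H S A \<delta> (cnt H x pol k s a)"
  using good unfolding outside_failure_def Let_def by blast

lemma phi_nn: "0 \<le> phi H S A \<delta> n"
proof -
  have "1 \<le> ln (max (exp 1) (real n))"
    by (metis ln_exp ln_le_cancel_iff max.cobounded1 exp_gt_zero less_le_trans order_refl max_def)
  then have a: "0 \<le> ln (ln (max (exp 1) (real n)))" by simp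
  have "(1::nat) \<le> 27 * H * S * A" using H1 S1 A1 by simp
  then have "1 \<le> 27 * real H * real S * real A"
    by (metis of_nat_1 of_nat_le_iff of_nat_mult of_nat_numeral)
  also have "\<dots> \<le> 27 * real H * real S * real A / \<delta>" using d0 d1
    by (simp add: le_divide_eq mult_left_le)
  finally have b: "0 \<le> ln (27 * real H * real S * real A / \<delta>)" by simp
  show ?thesis unfolding phi_def using a b by simp
qed

lemma phat_nn: "0 \<le> phat H x pol k s a s'" by (simp add: phat_def)

lemma C_pos: "C > 0" using S1 H1 by simp

abbreviation "K \<equiv> 2 + (1 + 2 * sqrt (real S)) * (real H - 1)"

lemma gap:
  assumes k: "k \<ge> 1" and t: "1 \<le> t" "t \<le> H" and s0: "s0 \<le> S" and q: "phip k t s0 = ereal q"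
    and opt: "\<And>j s. t < j \<Longrightarrow> j \<le> H + 1 \<Longrightarrow> s < S \<Longrightarrow> Vs j s \<le> Vt k j s"
  shows "t < j \<Longrightarrow> j \<le> H + 1 \<Longrightarrow> s < S \<Longrightarrow> Vt k j s - Vs j s \<le> (real H + 1 - real j) * K * (q / C)"
proof (induction "H + 1 - j" arbitrary: j s)
  case 0
  then have "j = H + 1" by simp
  then show ?case using Rb[OF k 0(4)] Vs_end by simp
next
  case (Suc m)
  have jH: "j \<le> H" and j1: "1 \<le> j" using Suc by auto
  define a where "a = pol k s j"
  define n where "n = cnt H x pol k s a"
  define f where "f = phi H S A \<delta> n"
  define Vn where "Vn = Vt k (j + 1)"
  define Ws where "Ws = Vs (j + 1)"
  define c where "c = real_of_ereal (min (ereal (real H - real j)) (ereal (rngV S Vn) + phip k j s))"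
  have rt: "pol k s j < A \<and> Vt k j s = Q k j s (pol k s j)" using Rt[OF k j1 jH Suc.prems(3)] by simp
  then have aA: "a < A" by (simp add: a_def)
  have pl: "ereal C * phiE H S A \<delta> n \<le> ereal q"
    using phip_later[OF k t(1) Suc.prems(1) jH Suc.prems(3) s0] q by (simp add: n_def a_def)
  have n0: "n > 0"
  proof (rule ccontr)
    assume "\<not> n > 0"
    then have "phiE H S A \<delta> n = \<infinity>" by (simp add: phiE_def)
    then show False using pl C_pos S1 H1 by simp
  qed
  have Cf: "C * f \<le> q" using pl n0 by (simp add: phiE_def f_def)
  have fq: "f \<le> q / C" using Cf C_pos by (simp add: pos_le_divide_eq mult.commute)
  have f0: "0 \<le> f" by (simp add: f_def phi_nn)
  have g: "\<bar>rhat H x rw pol k s a - r s a\<bar> \<le> f"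
      "(\<Sum>s'<S. \<bar>phat H x pol k s a s' - p s a s'\<bar>) \<le> 4 * sqrt (real S) * f"
    using G1[OF k Suc.prems(3) aA n0[unfolded n_def]] by (simp_all add: f_def n_def)
  have cle: "c \<le> real H - real j" unfolding c_def by (rule roe_min_le) (use jH in simp)
  have Vt_le: "Vt k j s \<le> rhat H x rw pol k s a + f + (\<Sum>s'<S. phat H x pol k s a s' * Vn s') + c * f"
  proof -
    have "Vt k j s = min 1 (rhat H x rw pol k s a + f) + min (maxV S Vn) ((\<Sum>s'<S. phat H x pol k s a s' * Vn s') + c * f)"
      using rt n0 by (simp add: Qval_def Let_def a_def n_def f_def c_def Vn_def)
    then show ?thesis by linarith
  qed
  have Vs_ge: "r s a + (\<Sum>s'<S. p s a s' * Ws s') \<le> Vs j s"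
    using Vs_step[OF jH aA] by (simp add: Ws_def)
  have Vn_b: "0 \<le> Vn s' \<and> Vn s' \<le> real H - real j" if "s' < S" for s'
  proof -
    have "Vs (j + 1) s' \<le> Vn s'" using opt[of "j + 1" s'] Suc.prems that jH by (simp add: Vn_def)
    moreover have "0 \<le> Vs (j + 1) s'" using Vs_bounds[of "j + 1" s'] jH that by simp
    moreover have "Vn s' \<le> real H - real j" using Vt_upper[OF k, of "j + 1" s'] jH that by (simp add: Vn_def)
    ultimately show ?thesis by simp
  qed
  have dsum: "(\<Sum>s'<S. phat H x pol k s a s' - p s a s') = 0"
    using phat_sum[OF xS n0[unfolded n_def]] psum[OF Suc.prems(3) aA] by (simp add: sum_subtractf)
  have hl: "(\<Sum>s'<S. (phat H x pol k s a s' - p s a s') * Vn s') \<le> (4 * sqrt (real S) * f) * (real H - real j) / 2"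
    by (rule half_l1[OF dsum]) (use Vn_b g(2) jH in auto)
  have IH: "Vn s' - Ws s' \<le> (real H - real j) * K * (q / C)" if "s' < S" for s'
    using Suc.hyps(1)[of "j + 1" s'] Suc.hyps(2) Suc.prems that by (simp add: Vn_def Ws_def)
  have pd: "(\<Sum>s'<S. p s a s' * (Vn s' - Ws s')) \<le> (real H - real j) * K * (q / C)"
  proof -
    have "(\<Sum>s'<S. p s a s' * (Vn s' - Ws s')) \<le> (\<Sum>s'<S. p s a s' * ((real H - real j) * K * (q / C)))"
    proof (rule sum_mono)
      fix s' assume "s' \<in> {..<S}"
      then show "p s a s' * (Vn s' - Ws s') \<le> p s a s' * ((real H - real j) * K * (q / C))"
        using IH[of s'] pnn[OF Suc.prems(3) aA, of s'] by (intro mult_left_mono) auto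
    qed
    also have "\<dots> = (\<Sum>s'<S. p s a s') * ((real H - real j) * K * (q / C))"
      by (simp only: sum_distrib_right)
    also have "\<dots> = (real H - real j) * K * (q / C)"
      using psum[OF Suc.prems(3) aA] by simp
    finally show ?thesis .
  qed
  have split: "(\<Sum>s'<S. phat H x pol k s a s' * Vn s') - (\<Sum>s'<S. p s a s' * Ws s')
      = (\<Sum>s'<S. (phat H x pol k s a s' - p s a s') * Vn s') + (\<Sum>s'<S. p s a s' * (Vn s' - Ws s'))"
    by (simp add: sum_subtractf[symmetric] sum.distrib[symmetric] algebra_simps)
  have cf: "c * f \<le> (real H - real j) * f" using cle f0 by (rule mult_right_mono)
  have Kf: "(2 + (1 + 2 * sqrt (real S)) * (real H - real j)) * f \<le> K * f"
    using j1 f0 by (intro mult_right_mono) (auto intro!: mult_left_mono)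
  have K0: "0 \<le> K" using H1 by simp
  have Kq: "K * f \<le> K * (q / C)" using fq K0 by (rule mult_left_mono)
  have "Vt k j s - Vs j s \<le> f + f + (real H - real j) * f + (4 * sqrt (real S) * f) * (real H - real j) / 2
      + (real H - real j) * K * (q / C)"
    using Vt_le Vs_ge g(1) split hl pd cf by linarith
  also have "\<dots> = (2 + (1 + 2 * sqrt (real S)) * (real H - real j)) * f + (real H - real j) * K * (q / C)"
    by (simp add: algebra_simps add_divide_distrib diff_divide_distrib)
  also have "\<dots> \<le> K * (q / C) + (real H - real j) * K * (q / C)" using Kf Kq by linarith
  also have "\<dots> = (real H + 1 - real j) * K * (q / C)"
  proof -
    have "\<And>(z::real) w b. w * z + b * w * z = (b + 1) * w * z" by (simp add: algebra_simps)
    then show ?thesis by (metis add.commute add_diff_eq)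
  qed
  finally show ?case .
qed

lemma opt_aux: "k \<ge> 1 \<Longrightarrow> \<forall>t s. H + 1 - t = m \<longrightarrow> 1 \<le> t \<longrightarrow> t \<le> H + 1 \<longrightarrow> s < S \<longrightarrow> Vs t s \<le> Vt k t s"
proof (induction m rule: less_induct)
  case (less m)
  note k = less.prems
  show ?case
  proof (intro allI impI)
    fix t s assume m: "H + 1 - t = m" and t1: "1 \<le> t" and tH1: "t \<le> H + 1" and s: "s < S"
    show "Vs t s \<le> Vt k t s"
    proof (cases "t = H + 1")
      case True then show ?thesis using Rb[OF k s] Vs_end by simp
    next
      case False
      then have tH: "t \<le> H" using tH1 by simp
      have opt: "Vs j s' \<le> Vt k j s'" if "t < j" "j \<le> H + 1" "s' < S" for j s'
        using less.IH[of "H + 1 - j"] m that t1 k by auto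
      define Vn where "Vn = Vt k (t + 1)"
      define Ws where "Ws = Vs (t + 1)"
      define pp where "pp = phip k t s"
      obtain a where aA: "a < A" and va: "Vs t s = r s a + (\<Sum>s'<S. p s a s' * Ws s')"
        using Vs_att[OF tH, of s] by (auto simp: Ws_def)
      have WV: "Ws s' \<le> Vn s'" if "s' < S" for s' using opt[of "t + 1" s'] that tH by (simp add: Ws_def Vn_def)
      have pmax: "(\<Sum>s'<S. p s a s' * Ws s') \<le> maxV S Vn"
        by (rule sum_p_le_max[OF S1]) (use pnn psum s aA WV in auto)
      have rb1: "r s a \<le> 1" using rb[OF s aA] by simp
      have QV: "Q k t s a \<le> Vt k t s" using Rt[OF k t1 tH s] aA by simp
      have "Vs t s \<le> Q k t s a"
      proof (cases "cnt H x pol k s a = 0")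
        case True
        then have "Q k t s a = 1 + maxV S Vn" by (simp add: Qval_def Vn_def)
        then show ?thesis using va pmax rb1 by simp
      next
        case False
        then have n0: "cnt H x pol k s a > 0" by simp
        define f where "f = phi H S A \<delta> (cnt H x pol k s a)"
        define c where "c = real_of_ereal (min (ereal (real H - real t)) (ereal (rngV S Vn) + pp))"
        have f0: "0 \<le> f" by (simp add: f_def phi_nn)
        have Qeq: "Q k t s a = min 1 (rhat H x rw pol k s a + f) + min (maxV S Vn) ((\<Sum>s'<S. phat H x pol k s a s' * Vn s') + c * f)"
          using n0 by (simp add: Qval_def Let_def f_def c_def Vn_def pp_def)
        have g: "\<bar>rhat H x rw pol k s a - r s a\<bar> \<le> f"
          "\<bar>\<Sum>s'<S. (phat H x pol k s a s' - p s a s') * Ws s'\<bar> \<le> rngV S Ws * f"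
          using G1[OF k s aA n0] t1 tH by (auto simp: f_def Ws_def)
        have Wsb: "0 \<le> Ws s' \<and> Ws s' \<le> real H - real t" if "s' < S" for s'
          using Vs_bounds[of "t + 1" s'] that tH by (simp add: Ws_def)
        have rW1: "rngV S Ws \<le> real H - real t" by (rule rngV_le[OF S1 Wsb])
        have pp0: "0 \<le> pp" using phip_nonneg[OF k t1 tH] s by (simp add: pp_def)
        have rc: "rngV S Ws \<le> c"
        proof (cases pp)
          case (real q)
          have cq: "c = min (real H - real t) (rngV S Vn + q)" using real by (simp add: c_def min_def)
          have q0: "0 \<le> q" using pp0 real by simp
          have gp: "Vt k j s' - Vs j s' \<le> (real H + 1 - real j) * K * (q / C)" if "t < j" "j \<le> H + 1" "s' < S" for j s'
            using gap[OF k t1 tH _ _ opt, of s q j s'] s real that by (simp add: pp_def)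
          define G where "G = (real H - real t) * K * (q / C)"
          have VG: "Vn s' \<le> Ws s' + G" if "s' < S" for s'
            using gp[of "t + 1" s'] that tH by (simp add: Vn_def Ws_def G_def)
          have Gq: "G \<le> q"
          proof -
            have K0: "0 \<le> K" using H1 by simp
            have qC: "0 \<le> q / C" using q0 C_pos by simp
            have "G \<le> (real H - 1) * K * (q / C)" unfolding G_def
              using t1 K0 qC by (intro mult_right_mono) auto
            also have "\<dots> \<le> C * (q / C)"
              using arith_K[of "real H" "sqrt (real S)"] H1 S1 qC by (intro mult_right_mono) auto
            also have "\<dots> = q" using C_pos S1 H1 by simp
            finally show ?thesis .
          qed
          have "rngV S Ws \<le> rngV S Vn + G" by (rule rngV_cmp[OF S1 WV VG])
          then show ?thesis using cq rW1 Gq by simp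
        next
          case PInf
          then show ?thesis using rW1 by (simp add: c_def)
        next
          case MInf
          then show ?thesis using pp0 by simp
        qed
        have r1: "r s a \<le> min 1 (rhat H x rw pol k s a + f)" using g(1) rb1 by linarith
        have sub: "(\<Sum>s'<S. (phat H x pol k s a s' - p s a s') * Ws s') = (\<Sum>s'<S. phat H x pol k s a s' * Ws s') - (\<Sum>s'<S. p s a s' * Ws s')"
          by (simp add: sum_subtractf[symmetric] algebra_simps)
        have pw: "(\<Sum>s'<S. phat H x pol k s a s' * Ws s') \<le> (\<Sum>s'<S. phat H x pol k s a s' * Vn s')"
          by (rule sum_mono) (use WV phat_nn in \<open>auto intro: mult_left_mono\<close>)
        have rcf: "rngV S Ws * f \<le> c * f" using rc f0 by (rule mult_right_mono)
        have "(\<Sum>s'<S. p s a s' * Ws s') \<le> (\<Sum>s'<S. phat H x pol k s a s' * Vn s') + c * f"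
          using g(2) sub pw rcf by linarith
        then have "(\<Sum>s'<S. p s a s' * Ws s') \<le> min (maxV S Vn) ((\<Sum>s'<S. phat H x pol k s a s' * Vn s') + c * f)"
          using pmax by simp
        then show ?thesis using Qeq va r1 by linarith
      qed
      then show ?thesis using QV by simp
    qed
  qed
qed

end

theorem lemma6:
  fixes H S A :: nat and \<delta> :: real
    and r :: "nat \<Rightarrow> nat \<Rightarrow> real" and p :: "nat \<Rightarrow> nat \<Rightarrow> nat \<Rightarrow> real" and p0 :: "nat \<Rightarrow> real"
    and x :: "nat \<Rightarrow> nat \<Rightarrow> nat" and rw :: "nat \<Rightarrow> nat \<Rightarrow> real"
    and pol :: "nat \<Rightarrow> nat \<Rightarrow> nat \<Rightarrow> nat" and Vt :: "nat \<Rightarrow> nat \<Rightarrow> nat \<Rightarrow> real"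
    and phip :: "nat \<Rightarrow> nat \<Rightarrow> nat \<Rightarrow> ereal"
  assumes "H \<ge> 1" and "S \<ge> 1" and "A \<ge> 1"
    and "0 < \<delta>" and "\<delta> \<le> 1"
    and "\<And>s a s'. s < S \<Longrightarrow> a < A \<Longrightarrow> s' < S \<Longrightarrow> p s a s' \<ge> 0"
    and "\<And>s a. s < S \<Longrightarrow> a < A \<Longrightarrow> (\<Sum>s'<S. p s a s') = 1"
    and "\<And>s a. s < S \<Longrightarrow> a < A \<Longrightarrow> 0 \<le> r s a \<and> r s a \<le> 1"
    and "\<And>s. s < S \<Longrightarrow> p0 s \<ge> 0" and "(\<Sum>s<S. p0 s) = 1"
    and "\<And>i t. 1 \<le> i \<Longrightarrow> 1 \<le> t \<Longrightarrow> t \<le> H + 1 \<Longrightarrow> x i t < S"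
    and "\<And>i t. 1 \<le> i \<Longrightarrow> 1 \<le> t \<Longrightarrow> t \<le> H \<Longrightarrow> 0 \<le> rw i t \<and> rw i t \<le> 1"
    and "ubev_run H S A \<delta> x rw pol Vt phip"
    and "outside_failure H S A \<delta> r p p0 x rw pol"
  shows "\<forall>k\<ge>1. \<forall>t\<in>{1..H}. \<forall>s<S. Vt k t s \<ge> Vstar H S A r p t s"
proof -
  interpret ub H S A \<delta> r p p0 x rw pol Vt phip
    by (unfold_locales) (use assms in auto)
  show ?thesis
  proof (intro allI impI ballI)
    fix k t s :: nat assume k: "k \<ge> 1" and t: "t \<in> {1..H}" and s: "s < S"
    show "Vt k t s \<ge> Vstar H S A r p t s"
      using opt_aux[OF k, of "H + 1 - t"] t s by auto
  qed
qed

end
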